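(* Let $n\ge 1$, let $\mathbf{F}=(f_{ij})$ be an $n\times n$ matrix with nonnegative entries ($f_{ij}$ is the flow from node $j$ to node $i$), let $\vec z=(z_1,\dots,z_n)^{\mathrm T}$ be a nonnegative column vector of boundary inputs and $\vec y=(y_1,\dots,y_n)$ a nonnegative row vector of boundary outputs. Define $T^{\mathrm{in}}_i=\sum_{j=1}^n f_{ij}+z_i$ and $T^{\mathrm{out}}_j=\sum_{i=1}^n f_{ij}+y_j$, assume all of these are positive, and assume the system is at steady state, i.e. $T^{\mathrm{in}}_\ell=T^{\mathrm{out}}_\ell$ for every $\ell$. Let $\mathbf{G}'=(g'_{ij})$ with $g'_{ij}=f_{ij}/T^{\mathrm{in}}_i$ and $\mathbf{G}=(g_{ij})$ with $g_{ij}=f_{ij}/T^{\mathrm{out}}_j$, and assume the series $\mathbf{N}'=\sum_{m\ge0}\mathbf{G}'^m=(\mathbf I-\mathbf G')^{-1}$ and $\mathbf{N}=\sum_{m\ge0}\mathbf{G}^m=(\mathbf I-\mathbf G)^{-1}$ converge. Then the realized input ratio $$I/D_{\mathrm{realized,input}}=\frac{\sum_{i=1}^n\bigl(\vec y(\mathbf N'-\mathbf I-\mathbf G')\bigr)_i}{\sum_{i=1}^n(\vec y\mathbf G')_i}$$ and the realized output ratio $$I/D_{\mathrm{realized,output}}=\frac{\sum_{i=1}^n\bigl((\mathbf N-\mathbf I-\mathbf G)\vec z\bigr)_i}{\sum_{i=1}^n(\mathbf G\vec z)_i}$$ are identical.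
   Context: This is the setting of ecological network (throughflow) analysis: nodes are ecosystem compartments, $\mathbf I$ is the $n\times n$ identity matrix. $\mathbf G'$ and $\mathbf G$ are the input- and output-oriented direct flow intensity matrices, and $\mathbf N'$, $\mathbf N$ the corresponding integral flow intensity matrices; in the model setting the paper takes the power series defining them to converge. The ratios compare indirect flow (terms $m\ge2$ of the series) to direct flow (term $m=1$), weighted by the observed boundary vectors. *)

theory Defs
  imports "HOL-Analysis.Analysis"
begin

fun matpow :: "real^'n^'n \<Rightarrow> nat \<Rightarrow> real^'n^'n" where
  "matpow A 0 = mat 1"
| "matpow A (Suc m) = A ** matpow A m"

definition vsum :: "real^'n \<Rightarrow> real" where
  "vsum v = (\<Sum>i\<in>UNIV. v $ i)"

end

theory Submission
  imports Defs
begin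

lemma matpow_comm: "matpow A m ** A = A ** matpow A m"
  by (induction m) (simp_all, metis matrix_mul_assoc)

lemma vsum_vm_lin: "bounded_linear (\<lambda>A::real^'n^'n. vsum (y v* A))"
proof -
  have "linear (\<lambda>A::real^'n^'n. vsum (y v* A))"
    by (rule linearI) (auto simp: vsum_def vector_matrix_mult_def sum.distrib[symmetric]
        algebra_simps sum_distrib_left)
  then show ?thesis using linear_conv_bounded_linear by blast
qed

lemma vsum_mv_lin: "bounded_linear (\<lambda>A::real^'n^'n. vsum (A *v z))"
proof -
  have "linear (\<lambda>A::real^'n^'n. vsum (A *v z))"
    by (rule linearI) (auto simp: vsum_def matrix_vector_mult_def sum.distrib[symmetric]
        algebra_simps sum_distrib_left)
  then show ?thesis using linear_conv_bounded_linear by blast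
qed

theorem theorem1:
  fixes F :: "real^'n^'n" and z :: "real^'n" and y :: "real^'n"
    and Tin Tout :: "'n \<Rightarrow> real" and G' G N' N :: "real^'n^'n"
  assumes F_nonneg: "\<And>i j. F $ i $ j \<ge> 0"
    and z_nonneg: "\<And>i. z $ i \<ge> 0"
    and y_nonneg: "\<And>i. y $ i \<ge> 0"
    and Tin_def: "\<And>i. Tin i = (\<Sum>j\<in>UNIV. F $ i $ j) + z $ i"
    and Tout_def: "\<And>j. Tout j = (\<Sum>i\<in>UNIV. F $ i $ j) + y $ j"
    and Tin_pos: "\<And>i. Tin i > 0"
    and Tout_pos: "\<And>j. Tout j > 0"
    and steady: "\<And>l. Tin l = Tout l"
    and G'_def: "G' = (\<chi> i j. F $ i $ j / Tin i)"
    and G_def: "G = (\<chi> i j. F $ i $ j / Tout j)"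
    and conv': "summable (\<lambda>m. matpow G' m)"
    and conv: "summable (\<lambda>m. matpow G m)"
    and N'_def: "N' = (\<Sum>m. matpow G' m)"
    and N_def: "N = (\<Sum>m. matpow G m)"
  shows "vsum (y v* (N' - mat 1 - G')) / vsum (y v* G')
       = vsum ((N - mat 1 - G) *v z) / vsum (G *v z)"
proof -
  define T where "T = Tin"
  have Tp: "T i > 0" for i using Tin_pos T_def by auto
  have Gd: "G $ i $ j = F $ i $ j / T j" for i j using G_def steady T_def by simp
  have G'd: "G' $ i $ j = G $ i $ j * T j / T i" for i j
    using Gd G'_def T_def Tp[of i] Tp[of j] by (simp add: field_simps)
  have pw: "matpow G' m $ i $ j = matpow G m $ i $ j * T j / T i" for m i j
  proof (induction m arbitrary: i j)
    case 0
    then show ?case using Tp[of i] Tp[of j] by (simp add: mat_def)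
  next
    case (Suc m)
    have "matpow G' (Suc m) $ i $ j = (\<Sum>k\<in>UNIV. G' $ i $ k * matpow G' m $ k $ j)"
      by (simp add: matrix_matrix_mult_def)
    also have "\<dots> = (\<Sum>k\<in>UNIV. (G $ i $ k * matpow G m $ k $ j) * (T j / T i))"
      unfolding Suc G'd
      proof (rule sum.cong)
        fix x show "G $ i $ x * T x / T i * (matpow G m $ x $ j * T j / T x) =
           G $ i $ x * matpow G m $ x $ j * (T j / T i)"
          using Tp[of x] Tp[of i] by (simp add: field_simps)
      qed simp
    also have "\<dots> = (\<Sum>k\<in>UNIV. G $ i $ k * matpow G m $ k $ j) * T j / T i"
      by (simp add: sum_distrib_right sum_divide_distrib)
    also have "\<dots> = matpow G (Suc m) $ i $ j * T j / T i"
      by (simp add: matrix_matrix_mult_def)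
    finally show ?case .
  qed
  define S where "S P = (\<Sum>i\<in>UNIV. \<Sum>j\<in>UNIV. P $ i $ j * T j)" for P :: "real^'n^'n"
  have yT: "y $ i / T i = 1 - (\<Sum>k\<in>UNIV. G $ k $ i)" for i
    using Tout_def[of i] steady[of i] T_def Tp[of i] Gd
    by (simp add: field_simps sum_divide_distrib[symmetric])
  have zT: "z $ j = T j - (\<Sum>l\<in>UNIV. G $ j $ l * T l)" for j
  proof -
    have "(\<Sum>l\<in>UNIV. G $ j $ l * T l) = (\<Sum>l\<in>UNIV. F $ j $ l)"
      proof (rule sum.cong)
      fix x show "G $ j $ x * T x = F $ j $ x" using Tp[of x] Gd[of j x] by simp
    qed simp
    then show ?thesis using Tin_def[of j] T_def by simp
  qed
  have L: "vsum (y v* matpow G' m) = S (matpow G m) - S (matpow G (Suc m))" for m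
  proof -
    have "vsum (y v* matpow G' m) = (\<Sum>j\<in>UNIV. \<Sum>i\<in>UNIV. (y $ i / T i) * (matpow G m $ i $ j * T j))"
      unfolding vsum_def vector_matrix_mult_def pw by (simp add: mult_ac)
    also have "\<dots> = (\<Sum>j\<in>UNIV. \<Sum>i\<in>UNIV. matpow G m $ i $ j * T j)
       - (\<Sum>j\<in>UNIV. \<Sum>i\<in>UNIV. \<Sum>k\<in>UNIV. G $ k $ i * (matpow G m $ i $ j * T j))"
      unfolding yT by (simp add: algebra_simps sum_subtractf sum_distrib_right sum_distrib_left)
    also have "\<dots> = S (matpow G m) - S (matpow G (Suc m))"
    proof -
      have "S (matpow G (Suc m)) = (\<Sum>i\<in>UNIV. \<Sum>j\<in>UNIV. \<Sum>k\<in>UNIV. G $ i $ k * (matpow G m $ k $ j * T j))"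
        unfolding S_def by (simp add: matrix_matrix_mult_def sum_distrib_right sum_distrib_left mult_ac)
      also have "\<dots> = (\<Sum>j\<in>UNIV. \<Sum>i\<in>UNIV. \<Sum>k\<in>UNIV. G $ i $ k * (matpow G m $ k $ j * T j))"
        by (rule sum.swap)
      also have "\<dots> = (\<Sum>j\<in>UNIV. \<Sum>k\<in>UNIV. \<Sum>i\<in>UNIV. G $ i $ k * (matpow G m $ k $ j * T j))"
        by (rule sum.cong[OF refl], rule sum.swap)
      finally have "S (matpow G (Suc m)) = \<dots>" .
      moreover have "S (matpow G m) = (\<Sum>j\<in>UNIV. \<Sum>i\<in>UNIV. matpow G m $ i $ j * T j)"
        unfolding S_def by (rule sum.swap)
      ultimately show ?thesis by simp
    qed
    finally show ?thesis .
  qed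
  have R: "vsum (matpow G m *v z) = S (matpow G m) - S (matpow G (Suc m))" for m
  proof -
    have "vsum (matpow G m *v z) = (\<Sum>i\<in>UNIV. \<Sum>j\<in>UNIV. matpow G m $ i $ j * T j)
       - (\<Sum>i\<in>UNIV. \<Sum>j\<in>UNIV. \<Sum>l\<in>UNIV. matpow G m $ i $ j * G $ j $ l * T l)"
      unfolding vsum_def matrix_vector_mult_def zT
      by (simp add: algebra_simps sum_subtractf sum_distrib_left)
    also have "\<dots> = S (matpow G m) - S (matpow G m ** G)"
    proof -
      have "S (matpow G m ** G) = (\<Sum>i\<in>UNIV. \<Sum>l\<in>UNIV. \<Sum>j\<in>UNIV. matpow G m $ i $ j * G $ j $ l * T l)"
        unfolding S_def by (simp add: matrix_matrix_mult_def sum_distrib_right)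
      also have "\<dots> = (\<Sum>i\<in>UNIV. \<Sum>j\<in>UNIV. \<Sum>l\<in>UNIV. matpow G m $ i $ j * G $ j $ l * T l)"
        by (rule sum.cong[OF refl], rule sum.swap)
      finally show ?thesis unfolding S_def by simp
    qed
    also have "matpow G m ** G = matpow G (Suc m)" using matpow_comm by simp
    finally show ?thesis .
  qed
  have eq: "vsum (y v* matpow G' m) = vsum (matpow G m *v z)" for m
    using L R by simp
  have e1: "vsum (y v* N') = vsum (N *v z)"
    unfolding N'_def N_def
    using bounded_linear.suminf[OF vsum_vm_lin conv', of y]
      bounded_linear.suminf[OF vsum_mv_lin conv, of z] eq by simp
  have e0: "vsum (y v* mat 1) = vsum (mat 1 *v z)" using eq[of 0] by simp
  have e2: "vsum (y v* G') = vsum (G *v z)" using eq[of 1] by simp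
  have lin1: "vsum (y v* (N' - mat 1 - G')) = vsum (y v* N') - vsum (y v* mat 1) - vsum (y v* G')"
    using linear_diff[OF bounded_linear.linear[OF vsum_vm_lin[of y]]] by simp
  have lin2: "vsum ((N - mat 1 - G) *v z) = vsum (N *v z) - vsum (mat 1 *v z) - vsum (G *v z)"
    using linear_diff[OF bounded_linear.linear[OF vsum_mv_lin[of z]]] by simp
  show ?thesis using lin1 lin2 e0 e1 e2 by simp
qed

end
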